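(* Let $\Gamma$ be a finite group and $\mathbf{E}=\bigoplus_{w\in\Gamma}\mathbf{E}_w$ a finite-dimensional associative $\bar{\mathbb{Q}}_l$-algebra with $1$, with $\dim\mathbf{E}_w=1$ and $\mathbf{E}_w\mathbf{E}_y=\mathbf{E}_{wy}$ for all $w,y$; for each $w$ choose a basis element $b_w$ of $\mathbf{E}_w$ (each $b_w$ is invertible). Let $V,V'$ be simple $\mathbf{E}$-modules and $t:V\to V$, $t':V'\to V'$ invertible $\bar{\mathbb{Q}}_l$-linear maps, and set $N=|\Gamma|^{-1}\sum_{w\in\Gamma}\mathrm{tr}(b_wt,V)\,\mathrm{tr}(t'^{-1}b_w^{-1},V')$. Then $N=0$ if $V,V'$ are not isomorphic $\mathbf{E}$-modules, and $N=1$ if $V=V'$ and $t=t'$. *)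

theory Defs
  imports "HOL-Algebra.Group" "HOL-Computational_Algebra.Polynomial"
begin

definition alg_closed_field :: "'k::field itself \<Rightarrow> bool" where
  "alg_closed_field _ \<longleftrightarrow> (\<forall>p :: 'k poly. degree p > 0 \<longrightarrow> (\<exists>x. poly p x = 0))"

definition is_algebra :: "('k::field \<Rightarrow> 'e::ring_1 \<Rightarrow> 'e) \<Rightarrow> bool" where
  "is_algebra scE \<longleftrightarrow> vector_space scE \<and>
     (\<forall>c x y. scE c (x * y) = scE c x * y \<and> scE c (x * y) = x * scE c y)"

definition internal_direct_sum :: "('k::field \<Rightarrow> 'e::ab_group_add \<Rightarrow> 'e) \<Rightarrow> 'g set \<Rightarrow> ('g \<Rightarrow> 'e set) \<Rightarrow> bool" where
  "internal_direct_sum sc I A \<longleftrightarrow>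
     (\<forall>w\<in>I. module.subspace sc (A w)) \<and>
     module.span sc (\<Union>w\<in>I. A w) = UNIV \<and>
     (\<forall>f. (\<forall>w\<in>I. f w \<in> A w) \<and> sum f I = 0 \<longrightarrow> (\<forall>w\<in>I. f w = 0))"

definition subspace_prod :: "('k::field \<Rightarrow> 'e::ring_1 \<Rightarrow> 'e) \<Rightarrow> 'e set \<Rightarrow> 'e set \<Rightarrow> 'e set" where
  "subspace_prod scE A B = module.span scE {a * b | a b. a \<in> A \<and> b \<in> B}"

definition ring_inv :: "'e::ring_1 \<Rightarrow> 'e" where
  "ring_inv x = (THE y. x * y = 1 \<and> y * x = 1)"

definition E_module :: "('k::field \<Rightarrow> 'e::ring_1 \<Rightarrow> 'e) \<Rightarrow> ('k \<Rightarrow> 'v::ab_group_add \<Rightarrow> 'v) \<Rightarrow> ('e \<Rightarrow> 'v \<Rightarrow> 'v) \<Rightarrow> bool" where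
  "E_module scE scV act \<longleftrightarrow> vector_space scV \<and>
     (\<forall>x y v. act (x + y) v = act x v + act y v) \<and>
     (\<forall>x u v. act x (u + v) = act x u + act x v) \<and>
     (\<forall>v. act 1 v = v) \<and>
     (\<forall>x y v. act (x * y) v = act x (act y v)) \<and>
     (\<forall>c x v. act (scE c x) v = scV c (act x v)) \<and>
     (\<forall>c x v. act x (scV c v) = scV c (act x v))"

definition simple_E_module :: "('k::field \<Rightarrow> 'e::ring_1 \<Rightarrow> 'e) \<Rightarrow> ('k \<Rightarrow> 'v::ab_group_add \<Rightarrow> 'v) \<Rightarrow> ('e \<Rightarrow> 'v \<Rightarrow> 'v) \<Rightarrow> bool" where
  "simple_E_module scE scV act \<longleftrightarrow> E_module scE scV act \<and> (\<exists>v::'v. v \<noteq> 0) \<and>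
     (\<forall>U. module.subspace scV U \<and> (\<forall>x. \<forall>u\<in>U. act x u \<in> U) \<longrightarrow> U = {0} \<or> U = UNIV)"

definition E_module_iso :: "('k::field \<Rightarrow> 'v::ab_group_add \<Rightarrow> 'v) \<Rightarrow> ('e \<Rightarrow> 'v \<Rightarrow> 'v) \<Rightarrow> ('k \<Rightarrow> 'w::ab_group_add \<Rightarrow> 'w) \<Rightarrow> ('e \<Rightarrow> 'w \<Rightarrow> 'w) \<Rightarrow> bool" where
  "E_module_iso scV act scW act' \<longleftrightarrow>
     (\<exists>f. bij f \<and> Vector_Spaces.linear scV scW f \<and> (\<forall>x v. f (act x v) = act' x (f v)))"

definition vtrace :: "('k::field \<Rightarrow> 'v::ab_group_add \<Rightarrow> 'v) \<Rightarrow> ('v \<Rightarrow> 'v) \<Rightarrow> 'k" where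
  "vtrace sc f = (let B = (SOME B. \<not> module.dependent sc B \<and> module.span sc B = UNIV)
     in \<Sum>b\<in>B. module.representation sc B (f b) b)"

end

theory Submission
  imports Defs
begin


lemma lin_mh: "Vector_Spaces.linear s1 s2 f \<Longrightarrow> module_hom s1 s2 f"
  by (simp add: module_hom_iff_linear)

lemma lin_add: "Vector_Spaces.linear s1 s2 f \<Longrightarrow> f (x + y) = f x + f y"
  using module_hom.add[OF lin_mh] by blast
lemma lin_diff: "Vector_Spaces.linear s1 s2 f \<Longrightarrow> f (x - y) = f x - f y"
  using module_hom.diff[OF lin_mh] by blast
lemma lin_scale: "Vector_Spaces.linear s1 s2 f \<Longrightarrow> f (s1 c x) = s2 c (f x)"
  using module_hom.scale[OF lin_mh] by blast
lemma lin_zero: "Vector_Spaces.linear s1 s2 f \<Longrightarrow> f 0 = 0"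
  using module_hom.zero[OF lin_mh] by blast
lemma lin_sum: "Vector_Spaces.linear s1 s2 f \<Longrightarrow> f (sum g A) = (\<Sum>a\<in>A. f (g a))"
  using module_hom.sum[OF lin_mh] by blast
lemma lin_neg: "Vector_Spaces.linear s1 s2 f \<Longrightarrow> f (- x) = - f x"
  using module_hom.neg[OF lin_mh] by blast

definition opev :: "('k::field \<Rightarrow> 'v::ab_group_add \<Rightarrow> 'v) \<Rightarrow> 'k poly \<Rightarrow> ('v \<Rightarrow> 'v) \<Rightarrow> 'v \<Rightarrow> 'v" where
  "opev sc p f w = (\<Sum>i<Suc (degree p). sc (coeff p i) ((f^^i) w))"

context
  fixes sc :: "'k::field \<Rightarrow> 'v::ab_group_add \<Rightarrow> 'v"
  assumes vs: "vector_space sc"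
begin

interpretation V: vector_space sc by (rule vs)

lemma opev_bound:
  assumes "degree p < N"
  shows "opev sc p f w = (\<Sum>i<N. sc (coeff p i) ((f^^i) w))"
  unfolding opev_def
  by (rule sum.mono_neutral_left) (use assms in \<open>auto intro!: coeff_eq_0\<close>)

lemma funpow_lin:
  assumes f: "Vector_Spaces.linear sc sc f"
  shows "Vector_Spaces.linear sc sc (f^^i)"
proof (induction i)
  case 0
  then show ?case using V.linear_id by (simp add: id_def)
next
  case (Suc i)
  show ?case unfolding funpow.simps(2) by (rule Vector_Spaces.linear_compose[OF Suc f])
qed

lemma opev_factor:
  assumes f: "Vector_Spaces.linear sc sc f"
  shows "opev sc ([:-a,1:] * q) f w = opev sc q f (f w - sc a w)"
proof -
  let ?n = "Suc (degree q)"
  have dq: "degree ([:-a,1:] * q) < Suc ?n"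
    using degree_mult_le[of "[:-a,1:]" q] by simp
  have c: "coeff ([:-a,1:] * q) i = - a * coeff q i + (case i of 0 \<Rightarrow> 0 | Suc n \<Rightarrow> coeff q n)" for i
    by (simp add: mult_pCons_left coeff_pCons)
  have "opev sc ([:-a,1:] * q) f w = (\<Sum>i<Suc ?n. sc (coeff ([:-a,1:] * q) i) ((f^^i) w))"
    by (rule opev_bound[OF dq])
  also have "\<dots> = (\<Sum>i<Suc ?n. sc (- a * coeff q i) ((f^^i) w)) + (\<Sum>i<Suc ?n. sc (case i of 0 \<Rightarrow> 0 | Suc n \<Rightarrow> coeff q n) ((f^^i) w))"
    unfolding c V.scale_left_distrib sum.distrib ..
  also have "(\<Sum>i<Suc ?n. sc (- a * coeff q i) ((f^^i) w)) = (\<Sum>i<?n. sc (- a * coeff q i) ((f^^i) w))"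
    by (simp add: coeff_eq_0)
  also have "(\<Sum>i<Suc ?n. sc (case i of 0 \<Rightarrow> 0 | Suc n \<Rightarrow> coeff q n) ((f^^i) w)) = (\<Sum>i<?n. sc (coeff q i) ((f^^i) (f w)))"
    unfolding sum.lessThan_Suc_shift by (simp add: funpow_swap1)
  finally have L: "opev sc ([:-a,1:] * q) f w = (\<Sum>i<?n. sc (- a * coeff q i) ((f^^i) w)) + (\<Sum>i<?n. sc (coeff q i) ((f^^i) (f w)))" .
  have "opev sc q f (f w - sc a w) = (\<Sum>i<?n. sc (coeff q i) ((f^^i) (f w - sc a w)))"
    unfolding opev_def ..
  also have "\<dots> = (\<Sum>i<?n. sc (coeff q i) ((f^^i) (f w)) - sc (a * coeff q i) ((f^^i) w))"
    using lin_diff[OF funpow_lin[OF f]] lin_scale[OF funpow_lin[OF f]]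
    by (simp add: V.scale_right_diff_distrib V.scale_scale mult.commute)
  finally show ?thesis unfolding L
    by (simp add: sum_subtractf V.scale_minus_left sum_negf)
qed

lemma eig_poly:
  assumes f: "Vector_Spaces.linear sc sc f" and k: "alg_closed_field TYPE('k)"
  shows "p \<noteq> 0 \<Longrightarrow> w \<noteq> 0 \<Longrightarrow> opev sc p f w = 0 \<Longrightarrow> \<exists>l u. u \<noteq> 0 \<and> f u = sc l u"
proof (induction "degree p" arbitrary: p w rule: less_induct)
  case less
  show ?case
  proof (cases "degree p = 0")
    case True
    then have "opev sc p f w = sc (coeff p 0) w" by (simp add: opev_def)
    moreover have "coeff p 0 \<noteq> 0" using True less.prems(1) leading_coeff_neq_0 by fastforce
    ultimately show ?thesis using less.prems by simp
  next
    case False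
    obtain a where "poly p a = 0" using k False unfolding alg_closed_field_def by auto
    then have "[:-a,1:] dvd p" using poly_eq_0_iff_dvd by blast
    then obtain q where pq: "p = [:-a,1:] * q" by (auto elim: dvdE)
    have q0: "q \<noteq> 0" using pq less.prems(1) by auto
    have "degree ([:-a,1:] * q) = degree [:-a,1:] + degree q" by (rule degree_mult_eq) (use q0 in auto)
    then have dq: "degree p = Suc (degree q)" using pq by simp
    have op: "opev sc q f (f w - sc a w) = 0" using less.prems(3) pq opev_factor[OF f] by simp
    show ?thesis
    proof (cases "f w - sc a w = 0")
      case True
      then show ?thesis using less.prems(2) by auto
    next
      case False
      show ?thesis by (rule less.hyps[of q, OF _ q0 False op]) (simp add: dq)
    qed
  qed
qed

end

lemma eigen_exists:
  fixes sc :: "'k::field \<Rightarrow> 'v::ab_group_add \<Rightarrow> 'v"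
  assumes vs: "vector_space sc" and F: "finite F" "module.span sc F = UNIV"
    and v0: "(v::'v) \<noteq> 0"
    and f: "Vector_Spaces.linear sc sc f" and k: "alg_closed_field TYPE('k)"
  shows "\<exists>l u. u \<noteq> 0 \<and> f u = sc l u"
proof -
  interpret V: vector_space sc by (rule vs)
  obtain B where B: "V.independent B" "UNIV \<subseteq> V.span B"
    using V.basis_exists[of UNIV] by blast
  have fB: "finite B" using V.independent_span_bound[OF F(1) B(1)] F(2) by auto
  interpret FV: finite_dimensional_vector_space sc B
    by unfold_locales (use fB B in auto)
  define d where "d = card B"
  define g where "g i = (f^^i) v" for i
  obtain c where c1: "\<exists>k\<le>d. c k \<noteq> 0" and c2: "(\<Sum>k\<le>d. sc (c k) (g k)) = 0"
  proof (cases "inj_on g {..d}")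
    case True
    define S where "S = g ` {..d}"
    have fS: "finite S" unfolding S_def by simp
    have cS: "card S = Suc d" unfolding S_def using card_image[OF True] by simp
    have "V.dim S \<le> d" using FV.dim_subset_UNIV[of S] unfolding FV.dimension_def d_def .
    then have "V.dependent S" using cS by (intro FV.dependent_biggerset_general) auto
    then obtain u where u1: "\<exists>s\<in>S. u s \<noteq> 0" and u2: "(\<Sum>s\<in>S. sc (u s) s) = 0"
      using V.dependent_finite[OF fS] by blast
    show ?thesis
    proof (rule that[of "\<lambda>k. u (g k)"])
      show "\<exists>k\<le>d. u (g k) \<noteq> 0" using u1 unfolding S_def by auto
      show "(\<Sum>k\<le>d. sc (u (g k)) (g k)) = 0"
        using u2 unfolding S_def sum.reindex[OF True] by (simp add: o_def)
    qed
  next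
    case False
    then obtain i j where ij: "i \<le> d" "j \<le> d" "i \<noteq> j" "g i = g j"
      unfolding inj_on_def by auto
    show ?thesis
    proof (rule that[of "\<lambda>k. (if k = i then 1 else 0) - (if k = j then 1 else 0)"])
      show "\<exists>k\<le>d. (if k = i then 1 else 0) - (if k = j then 1 else (0::'k)) \<noteq> 0"
        using ij by (intro exI[of _ i]) auto
      have "(\<Sum>k\<le>d. sc ((if k = i then 1 else 0) - (if k = j then 1 else 0)) (g k))
          = (\<Sum>k\<le>d. (if k = i then g k else 0)) - (\<Sum>k\<le>d. (if k = j then g k else 0))"
        by (simp add: V.scale_left_diff_distrib sum_subtractf if_distrib[of "\<lambda>x. sc x _"] cong: if_cong)
      also have "\<dots> = 0" using ij by simp
      finally show "(\<Sum>k\<le>d. sc ((if k = i then 1 else 0) - (if k = j then 1 else 0)) (g k)) = 0" .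
    qed
  qed
  define p where "p = (\<Sum>k\<le>d. monom (c k) k)"
  have cp: "coeff p k = (if k \<le> d then c k else 0)" for k
    unfolding p_def by (simp add: coeff_sum coeff_monom)
  have dp: "degree p < Suc d" using cp by (intro le_imp_less_Suc degree_le) auto
  have p0: "p \<noteq> 0" using c1 cp by (metis coeff_0)
  have "opev sc p f v = (\<Sum>k<Suc d. sc (coeff p k) (g k))"
    unfolding opev_bound[OF vs dp] g_def ..
  also have "\<dots> = 0" using c2 by (simp add: cp lessThan_Suc_atMost)
  finally have "opev sc p f v = 0" .
  then show ?thesis using eig_poly[OF vs f k p0 v0] by blast
qed


section \<open>Modules\<close>

lemma em_vs: "E_module scE scV act \<Longrightarrow> vector_space scV"
  by (simp add: E_module_def)

lemma em_lin: "E_module scE scV act \<Longrightarrow> Vector_Spaces.linear scV scV (act x)"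
  by (simp add: E_module_def Vector_Spaces.linear_iff)

lemma em_lin2: "E_module scE scV act \<Longrightarrow> vector_space scE \<Longrightarrow> Vector_Spaces.linear scE scV (\<lambda>x. act x v)"
  by (simp add: E_module_def Vector_Spaces.linear_iff)

lemma em_mult: "E_module scE scV act \<Longrightarrow> act (x * y) v = act x (act y v)"
  by (simp add: E_module_def)

lemma em_one: "E_module scE scV act \<Longrightarrow> act 1 v = v"
  by (simp add: E_module_def)

lemma em_scE: "E_module scE scV act \<Longrightarrow> act (scE c x) v = scV c (act x v)"
  by (simp add: E_module_def)

lemma simple_fin:
  fixes scE :: "'k::field \<Rightarrow> 'e::ring_1 \<Rightarrow> 'e" and scV :: "'k \<Rightarrow> 'v::ab_group_add \<Rightarrow> 'v"
  assumes sm: "simple_E_module scE scV act" and vsE: "vector_space scE"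
    and S: "finite S" "module.span scE S = UNIV"
  shows "\<exists>F. finite F \<and> module.span scV F = UNIV"
proof -
  have em: "E_module scE scV act" using sm by (simp add: simple_E_module_def)
  interpret V: vector_space scV by (rule em_vs[OF em])
  interpret E: vector_space scE by (rule vsE)
  obtain v0 :: 'v where v0: "v0 \<noteq> 0" using sm by (auto simp: simple_E_module_def)
  have mh: "module_hom scE scV (\<lambda>x. act x v0)" using lin_mh[OF em_lin2[OF em vsE]] .
  have U: "V.span ((\<lambda>x. act x v0) ` S) = range (\<lambda>x. act x v0)"
    using module_hom.span_image[OF mh, of S] S(2) by simp
  have "V.subspace (range (\<lambda>x. act x v0))" unfolding U[symmetric] by simp
  moreover have "\<forall>y. \<forall>u\<in>range (\<lambda>x. act x v0). act y u \<in> range (\<lambda>x. act x v0)"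
    using em_mult[OF em] by (auto simp del: E_module_def) (metis rangeI)
  ultimately have "range (\<lambda>x. act x v0) = {0} \<or> range (\<lambda>x. act x v0) = UNIV"
    using sm unfolding simple_E_module_def by blast
  moreover have "v0 \<in> range (\<lambda>x. act x v0)" using em_one[OF em] by (metis rangeI)
  ultimately have "range (\<lambda>x. act x v0) = UNIV" using v0 by auto
  then show ?thesis using U S(1) by (intro exI[of _ "(\<lambda>x. act x v0) ` S"]) auto
qed

definition basis_of :: "('k::field \<Rightarrow> 'v::ab_group_add \<Rightarrow> 'v) \<Rightarrow> 'v set" where
  "basis_of sc = (SOME B. \<not> module.dependent sc B \<and> module.span sc B = UNIV)"

lemma vtrace_eq: "vtrace sc f = (\<Sum>b\<in>basis_of sc. module.representation sc (basis_of sc) (f b) b)"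
  by (simp add: vtrace_def basis_of_def Let_def)

lemma basis_of:
  fixes sc :: "'k::field \<Rightarrow> 'v::ab_group_add \<Rightarrow> 'v"
  assumes vs: "vector_space sc" and F: "finite F" "module.span sc F = UNIV"
  shows "finite (basis_of sc) \<and> \<not> module.dependent sc (basis_of sc) \<and> module.span sc (basis_of sc) = UNIV"
proof -
  interpret V: vector_space sc by (rule vs)
  obtain B where B: "V.independent B" "UNIV \<subseteq> V.span B"
    using V.basis_exists[of UNIV] by blast
  have ex: "\<exists>B. V.independent B \<and> V.span B = UNIV" using B by auto
  have p: "V.independent (basis_of sc) \<and> V.span (basis_of sc) = UNIV"
    unfolding basis_of_def by (rule someI_ex[OF ex])
  then show ?thesis using V.independent_span_bound[OF F(1)] F(2) by auto
qed

lemma simple_nonzero: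
  fixes scV :: "'k::field \<Rightarrow> 'v::ab_group_add \<Rightarrow> 'v"
  shows "simple_E_module scE scV act \<Longrightarrow> \<exists>v::'v. v \<noteq> 0"
  by (simp add: simple_E_module_def)

lemma schur_zero:
  fixes scE :: "'k::field \<Rightarrow> 'e::ring_1 \<Rightarrow> 'e" and scV :: "'k \<Rightarrow> 'v::ab_group_add \<Rightarrow> 'v"
    and scW :: "'k \<Rightarrow> 'w::ab_group_add \<Rightarrow> 'w"
  assumes sV: "simple_E_module scE scV act" and sW: "simple_E_module scE scW act'"
    and P: "Vector_Spaces.linear scV scW P" and comm: "\<And>x v. P (act x v) = act' x (P v)"
    and niso: "\<not> E_module_iso scV act scW act'"
  shows "P v = 0"
proof -
  have mh: "module_hom scV scW P" using lin_mh[OF P] .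
  have emV: "E_module scE scV act" using sV by (simp add: simple_E_module_def)
  have emW: "E_module scE scW act'" using sW by (simp add: simple_E_module_def)
  interpret V: vector_space scV by (rule em_vs[OF emV])
  interpret W: vector_space scW by (rule em_vs[OF emW])
  have K: "V.subspace {x. P x = 0}" using module_hom.subspace_kernel[OF mh] .
  have Ki: "\<forall>x. \<forall>u\<in>{x. P x = 0}. act x u \<in> {x. P x = 0}"
    using comm lin_zero[OF em_lin[OF emW]] by simp
  have "{x. P x = 0} = {0} \<or> {x. P x = 0} = UNIV"
    using sV K Ki unfolding simple_E_module_def by blast
  then show ?thesis
  proof
    assume K0: "{x. P x = 0} = {0}"
    then have inj: "inj P" using module_hom.inj_iff_eq_0[OF mh] by auto
    have I: "W.subspace (range P)" using module_hom.subspace_image[OF mh, of UNIV] by simp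
    have Ii: "\<forall>x. \<forall>u\<in>range P. act' x u \<in> range P" using comm by (auto simp: image_iff) (metis)
    obtain v1 :: 'v where "v1 \<noteq> 0" using simple_nonzero[OF sV] by blast
    then have "P v1 \<noteq> 0" using K0 by auto
    then have "range P \<noteq> {0}" by auto
    then have "range P = UNIV" using sW I Ii unfolding simple_E_module_def by blast
    then have "bij P" using inj by (simp add: bij_def)
    then have "E_module_iso scV act scW act'" unfolding E_module_iso_def using P comm by blast
    with niso show ?thesis by simp
  qed auto
qed

lemma schur_scalar:
  fixes scE :: "'k::field \<Rightarrow> 'e::ring_1 \<Rightarrow> 'e" and scV :: "'k \<Rightarrow> 'v::ab_group_add \<Rightarrow> 'v"
  assumes sV: "simple_E_module scE scV act" and F: "finite F" "module.span scV F = UNIV"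
    and k: "alg_closed_field TYPE('k)"
    and P: "Vector_Spaces.linear scV scV P" and comm: "\<And>x v. P (act x v) = act x (P v)"
  shows "\<exists>l. \<forall>v. P v = scV l v"
proof -
  have emV: "E_module scE scV act" using sV by (simp add: simple_E_module_def)
  interpret V: vector_space scV by (rule em_vs[OF emV])
  obtain v1 :: 'v where v1: "v1 \<noteq> 0" using simple_nonzero[OF sV] by blast
  obtain l u where lu: "u \<noteq> 0" "P u = scV l u" using eigen_exists[OF em_vs[OF emV] F v1 P k] by blast
  define Q where "Q v = P v - scV l v" for v
  have Q: "Vector_Spaces.linear scV scV Q"
    unfolding Vector_Spaces.linear_iff Q_def using lin_add[OF P] lin_scale[OF P] V.vector_space_axioms
    by (auto simp: V.scale_right_distrib V.scale_right_diff_distrib V.scale_left_commute algebra_simps)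
  have K: "V.subspace {x. Q x = 0}" using module_hom.subspace_kernel[OF lin_mh[OF Q]] .
  have Ki: "\<forall>x. \<forall>u\<in>{x. Q x = 0}. act x u \<in> {x. Q x = 0}"
  proof (intro allI ballI)
    fix x u assume "u \<in> {x. Q x = 0}"
    then have "P u - scV l u = 0" by (simp add: Q_def)
    then have "act x (P u - scV l u) = 0" using lin_zero[OF em_lin[OF emV]] by simp
    then show "act x u \<in> {x. Q x = 0}"
      using lin_diff[OF em_lin[OF emV]] lin_scale[OF em_lin[OF emV]] comm by (simp add: Q_def)
  qed
  have "{x. Q x = 0} = {0} \<or> {x. Q x = 0} = UNIV"
    using sV K Ki unfolding simple_E_module_def by blast
  moreover have "u \<in> {x. Q x = 0}" using lu by (simp add: Q_def)
  ultimately have "{x. Q x = 0} = UNIV" using lu by auto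
  then show ?thesis by (auto simp: Q_def)
qed




context
  fixes G :: "('g, 'm) monoid_scheme"
    and scE :: "'k::field \<Rightarrow> 'e::ring_1 \<Rightarrow> 'e"
    and Ecomp :: "'g \<Rightarrow> 'e set"
    and b :: "'g \<Rightarrow> 'e"
  assumes grp: "group G"
    and alg: "is_algebra scE"
    and dsum: "internal_direct_sum scE (carrier G) Ecomp"
    and dim1: "\<And>w. w \<in> carrier G \<Longrightarrow> vector_space.dim scE (Ecomp w) = 1"
    and mult: "\<And>w y. w \<in> carrier G \<Longrightarrow> y \<in> carrier G \<Longrightarrow>
                 subspace_prod scE (Ecomp w) (Ecomp y) = Ecomp (monoid.mult G w y)"
    and b_in: "\<And>w. w \<in> carrier G \<Longrightarrow> b w \<in> Ecomp w"
    and b_nz: "\<And>w. w \<in> carrier G \<Longrightarrow> b w \<noteq> 0"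
begin

lemma vsE: "vector_space scE" using alg by (simp add: is_algebra_def)

interpretation E: vector_space scE by (rule vsE)

lemma alg1: "scE c x * y = scE c (x * y)" using alg unfolding is_algebra_def by metis
lemma alg2: "x * scE c y = scE c (x * y)" using alg unfolding is_algebra_def by metis

lemma Ecomp_span:
  assumes w: "w \<in> carrier G"
  shows "Ecomp w = E.span {b w}"
proof -
  have sub: "E.subspace (Ecomp w)" using dsum w by (simp add: internal_direct_sum_def)
  obtain B where B: "B \<subseteq> Ecomp w" "E.independent B" "Ecomp w \<subseteq> E.span B" "card B = E.dim (Ecomp w)"
    using E.basis_exists by blast
  then have "card B = 1" using dim1[OF w] by simp
  then obtain c where Bc: "B = {c}" using card_1_singletonE by blast
  have "b w \<in> E.span {c}" using B(3) Bc b_in[OF w] by auto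
  then obtain k where k: "b w = scE k c" using E.span_singleton by auto
  have k0: "k \<noteq> 0" using k b_nz[OF w] by auto
  have "c = scE (1/k) (b w)" using k k0 by simp
  then have "c \<in> E.span {b w}" by (simp add: E.span_base E.span_scale)
  then have "E.span {c} \<subseteq> E.span {b w}" by (simp add: E.span_minimal)
  moreover have "E.span {b w} \<subseteq> Ecomp w" using sub b_in[OF w] by (simp add: E.span_minimal)
  ultimately show ?thesis using B(3) Bc by auto
qed

lemma span_b: "E.span (b ` carrier G) = UNIV"
proof -
  have "(\<Union>w\<in>carrier G. Ecomp w) \<subseteq> E.span (b ` carrier G)"
  proof
    fix x assume "x \<in> (\<Union>w\<in>carrier G. Ecomp w)"
    then obtain w where w: "w \<in> carrier G" "x \<in> Ecomp w" by blast
    have "E.span {b w} \<subseteq> E.span (b ` carrier G)" using w by (intro E.span_mono) auto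
    then show "x \<in> E.span (b ` carrier G)" using w Ecomp_span by auto
  qed
  then have "E.span (\<Union>w\<in>carrier G. Ecomp w) \<subseteq> E.span (b ` carrier G)"
    by (simp add: E.span_minimal)
  then show ?thesis using dsum by (auto simp: internal_direct_sum_def)
qed

lemma b_mult:
  assumes w: "w \<in> carrier G" and y: "y \<in> carrier G"
  shows "\<exists>a. a \<noteq> 0 \<and> b w * b y = scE a (b (w \<otimes>\<^bsub>G\<^esub> y))"
proof -
  have wy: "w \<otimes>\<^bsub>G\<^esub> y \<in> carrier G" using grp w y by (simp add: group.is_monoid monoid.m_closed)
  have "b w * b y \<in> subspace_prod scE (Ecomp w) (Ecomp y)"
    unfolding subspace_prod_def using b_in w y by (intro E.span_base) blast
  then have "b w * b y \<in> E.span {b (w \<otimes>\<^bsub>G\<^esub> y)}" using mult[OF w y] Ecomp_span[OF wy] by simp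
  then obtain a where a: "b w * b y = scE a (b (w \<otimes>\<^bsub>G\<^esub> y))" using E.span_singleton by auto
  have "a \<noteq> 0"
  proof
    assume a0: "a = 0"
    have "{p * q |p q. p \<in> Ecomp w \<and> q \<in> Ecomp y} \<subseteq> {0}"
    proof
      fix z assume "z \<in> {p * q |p q. p \<in> Ecomp w \<and> q \<in> Ecomp y}"
      then obtain p q where pq: "z = p * q" "p \<in> Ecomp w" "q \<in> Ecomp y"
        by blast
      have "p \<in> range (\<lambda>k. scE k (b w))" using pq(2) Ecomp_span[OF w] E.span_singleton by simp
      then obtain k1 where k1: "p = scE k1 (b w)" by blast
      have "q \<in> range (\<lambda>k. scE k (b y))" using pq(3) Ecomp_span[OF y] E.span_singleton by simp
      then obtain k2 where k2: "q = scE k2 (b y)" by blast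
      have "z = scE k2 (scE k1 (b w * b y))" unfolding pq(1) k1 k2 alg1 alg2 ..
      then show "z \<in> {0}" using a a0 by (simp only: E.scale_zero_left E.scale_zero_right singleton_iff)
    qed
    then have "E.span {p * q |p q. p \<in> Ecomp w \<and> q \<in> Ecomp y} \<subseteq> E.span {0}"
      by (rule E.span_mono)
    then have "subspace_prod scE (Ecomp w) (Ecomp y) \<subseteq> {0}"
      unfolding subspace_prod_def by simp
    then have "b (w \<otimes>\<^bsub>G\<^esub> y) = 0" using mult[OF w y] b_in[OF wy] by auto
    then show False using b_nz[OF wy] by simp
  qed
  then show ?thesis using a by blast
qed

lemma one_eq: "\<exists>c. c \<noteq> 0 \<and> b \<one>\<^bsub>G\<^esub> = scE c 1"
proof -
  have e: "\<one>\<^bsub>G\<^esub> \<in> carrier G" using grp by (simp add: group.is_monoid monoid.one_closed)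
  obtain c where c: "c \<noteq> 0" "b \<one>\<^bsub>G\<^esub> * b \<one>\<^bsub>G\<^esub> = scE c (b \<one>\<^bsub>G\<^esub>)"
    using b_mult[OF e e] grp e by (auto simp: group.is_monoid monoid.l_one)
  define u where "u = scE (1/c) (b \<one>\<^bsub>G\<^esub>)"
  have uu: "u * u = u" unfolding u_def using c by (simp add: alg1 alg2)
  have ub: "u * b y = b y" if y: "y \<in> carrier G" for y
  proof -
    obtain a where a: "a \<noteq> 0" "b \<one>\<^bsub>G\<^esub> * b y = scE a (b y)"
      using b_mult[OF e y] grp y by (auto simp: group.is_monoid monoid.l_one)
    define be where "be = a / c"
    have ub1: "u * b y = scE be (b y)" unfolding u_def be_def using a by (simp add: alg1)
    have "u * (u * b y) = u * b y" using uu by (simp add: mult.assoc[symmetric])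
    then have "scE (be * be) (b y) = scE be (b y)" unfolding ub1 by (simp add: alg2 ub1)
    then have "be * be = be" using b_nz[OF y] by simp
    moreover have "be \<noteq> 0" unfolding be_def using a c by simp
    ultimately have "be = 1" by (metis mult_cancel_right2)
    then show ?thesis using ub1 by simp
  qed
  have "E.subspace {x. u * x = x}"
    unfolding E.subspace_def by (auto simp: distrib_left alg2)
  then have "u * x = x" for x
    using E.span_induct[of x "b ` carrier G" "\<lambda>x. u * x = x"] span_b ub by auto
  then have "u = 1" by (metis mult.right_neutral)
  moreover have "scE c u = b \<one>\<^bsub>G\<^esub>" unfolding u_def using c by simp
  ultimately have "b \<one>\<^bsub>G\<^esub> = scE c 1" by simp
  then show ?thesis using c by blast
qed

lemma b_inv:
  assumes w: "w \<in> carrier G"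
  shows "b w * ring_inv (b w) = 1 \<and> ring_inv (b w) * b w = 1"
proof -
  have e: "\<one>\<^bsub>G\<^esub> \<in> carrier G" using grp by (simp add: group.is_monoid monoid.one_closed)
  obtain c where c: "c \<noteq> 0" "b \<one>\<^bsub>G\<^esub> = scE c 1" using one_eq by blast
  define w' where "w' = inv\<^bsub>G\<^esub> w"
  have w': "w' \<in> carrier G" unfolding w'_def using grp w by (simp add: group.inv_closed)
  obtain a where a: "a \<noteq> 0" "b w * b w' = scE a (b \<one>\<^bsub>G\<^esub>)"
    using b_mult[OF w w'] grp w unfolding w'_def by (auto simp: group.r_inv)
  obtain a' where a': "a' \<noteq> 0" "b w' * b w = scE a' (b \<one>\<^bsub>G\<^esub>)"
    using b_mult[OF w' w] grp w unfolding w'_def by (auto simp: group.l_inv)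
  define r where "r = scE (1/(a*c)) (b w')"
  define l where "l = scE (1/(a'*c)) (b w')"
  have r1: "b w * r = 1" unfolding r_def using a c by (simp add: alg2)
  have l1: "l * b w = 1" unfolding l_def using a' c by (simp add: alg1)
  have "l = l * (b w * r)" using r1 by simp
  also have "\<dots> = (l * b w) * r" by (simp add: mult.assoc)
  also have "\<dots> = r" using l1 by simp
  finally have "l = r" .
  then have r2: "r * b w = 1" using l1 by simp
  have "ring_inv (b w) = r"
    unfolding ring_inv_def
  proof (rule the_equality)
    show "b w * r = 1 \<and> r * b w = 1" using r1 r2 by simp
    fix y assume "b w * y = 1 \<and> y * b w = 1"
    then have "y * b w = 1" by simp
    have "y = y * (b w * r)" using r1 by simp
    also have "\<dots> = (y * b w) * r" by (simp add: mult.assoc)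
    also have "\<dots> = r" using \<open>y * b w = 1\<close> by simp
    finally show "y = r" .
  qed
  then show ?thesis using r1 r2 by simp
qed

end



definition avg :: "('g, 'm) monoid_scheme \<Rightarrow> ('g \<Rightarrow> 'e::ring_1) \<Rightarrow> ('e \<Rightarrow> 'v \<Rightarrow> 'v) \<Rightarrow> ('e \<Rightarrow> 'w \<Rightarrow> 'w) \<Rightarrow> ('v \<Rightarrow> 'w) \<Rightarrow> 'v \<Rightarrow> 'w::ab_group_add" where
  "avg G b act act' X v = (\<Sum>w\<in>carrier G. act' (ring_inv (b w)) (X (act (b w) v)))"

lemma avg_lin:
  fixes scV :: "'k::field \<Rightarrow> 'v::ab_group_add \<Rightarrow> 'v" and scW :: "'k \<Rightarrow> 'w::ab_group_add \<Rightarrow> 'w"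
  assumes emV: "E_module scE scV act" and emW: "E_module scE scW act'" and X: "Vector_Spaces.linear scV scW X"
  shows "Vector_Spaces.linear scV scW (avg G b act act' X)"
proof -
  interpret V: vector_space scV by (rule em_vs[OF emV])
  interpret W: vector_space scW by (rule em_vs[OF emW])
  show ?thesis
    unfolding Vector_Spaces.linear_iff avg_def
    using V.vector_space_axioms W.vector_space_axioms
    by (simp add: lin_add[OF em_lin[OF emV]] lin_add[OF X] lin_add[OF em_lin[OF emW]] sum.distrib
        lin_scale[OF em_lin[OF emV]] lin_scale[OF X] lin_scale[OF em_lin[OF emW]] W.scale_sum_right)
qed

lemma avg_comm:
  fixes G :: "('g, 'm) monoid_scheme" and scE :: "'k::field \<Rightarrow> 'e::ring_1 \<Rightarrow> 'e"
    and scV :: "'k \<Rightarrow> 'v::ab_group_add \<Rightarrow> 'v" and scW :: "'k \<Rightarrow> 'w::ab_group_add \<Rightarrow> 'w"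
  assumes grp: "group G" and alg: "is_algebra scE"
    and emV: "E_module scE scV act" and emW: "E_module scE scW act'" and X: "Vector_Spaces.linear scV scW X"
    and bm: "\<And>w y. w \<in> carrier G \<Longrightarrow> y \<in> carrier G \<Longrightarrow> \<exists>a. a \<noteq> 0 \<and> b w * b y = scE a (b (w \<otimes>\<^bsub>G\<^esub> y))"
    and bi: "\<And>w. w \<in> carrier G \<Longrightarrow> b w * ring_inv (b w) = 1 \<and> ring_inv (b w) * b w = 1"
    and spanb: "module.span scE (b ` carrier G) = UNIV"
  shows "avg G b act act' X (act x v) = act' x (avg G b act act' X v)"
proof -
  interpret V: vector_space scV by (rule em_vs[OF emV])
  interpret W: vector_space scW by (rule em_vs[OF emW])
  interpret E: vector_space scE using alg by (simp add: is_algebra_def)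
  have alg1: "scE c x * y = scE c (x * y)" for c x y using alg unfolding is_algebra_def by metis
  have alg2: "x * scE c y = scE c (x * y)" for c x y using alg unfolding is_algebra_def by metis
  interpret Gp: group G by (rule grp)
  let ?A = "avg G b act act' X"
  have Alin: "Vector_Spaces.linear scV scW ?A" by (rule avg_lin[OF emV emW X])
  have base: "?A (act (b y) v) = act' (b y) (?A v)" if y: "y \<in> carrier G" for y v
  proof -
    have bij: "bij_betw (\<lambda>u. u \<otimes>\<^bsub>G\<^esub> y) (carrier G) (carrier G)"
      by (rule bij_betw_byWitness[where f' = "\<lambda>u. u \<otimes>\<^bsub>G\<^esub> inv\<^bsub>G\<^esub> y"])
         (use y in \<open>auto simp: Gp.m_assoc\<close>)
    have tm: "act' (b y * ring_inv (b (u \<otimes>\<^bsub>G\<^esub> y))) (X (act (b (u \<otimes>\<^bsub>G\<^esub> y)) v))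
        = act' (ring_inv (b u)) (X (act (b u) (act (b y) v)))" if u: "u \<in> carrier G" for u
    proof -
      have uy: "u \<otimes>\<^bsub>G\<^esub> y \<in> carrier G" using grp u y by (simp add: group.is_monoid monoid.m_closed)
      obtain a where a: "a \<noteq> 0" "b u * b y = scE a (b (u \<otimes>\<^bsub>G\<^esub> y))" using bm[OF u y] by blast
      have i: "b (u \<otimes>\<^bsub>G\<^esub> y) = scE (1/a) (b u * b y)" using a by simp
      have "b u * b y * ring_inv (b (u \<otimes>\<^bsub>G\<^esub> y)) = scE a 1"
        unfolding a(2) alg1 using bi[OF uy] by simp
      then have "ring_inv (b u) * (b u * b y * ring_inv (b (u \<otimes>\<^bsub>G\<^esub> y))) = scE a (ring_inv (b u))"
        by (simp add: alg2)
      moreover have "ring_inv (b u) * (b u * b y * ring_inv (b (u \<otimes>\<^bsub>G\<^esub> y))) = b y * ring_inv (b (u \<otimes>\<^bsub>G\<^esub> y))"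
        using bi[OF u] by (simp add: mult.assoc[symmetric])
      ultimately have ii: "b y * ring_inv (b (u \<otimes>\<^bsub>G\<^esub> y)) = scE a (ring_inv (b u))" by simp
      have iii: "act (b (u \<otimes>\<^bsub>G\<^esub> y)) v = scV (1/a) (act (b u) (act (b y) v))"
        unfolding i by (simp add: em_scE[OF emV] em_mult[OF emV])
      show ?thesis unfolding ii iii
        using a(1) by (simp add: em_scE[OF emV] em_scE[OF emW] em_mult[OF emV] lin_scale[OF X] lin_scale[OF em_lin[OF emW]])
    qed
    have "act' (b y) (?A v) = (\<Sum>w\<in>carrier G. act' (b y * ring_inv (b w)) (X (act (b w) v)))"
      unfolding avg_def lin_sum[OF em_lin[OF emW]] em_mult[OF emW] ..
    also have "\<dots> = (\<Sum>u\<in>carrier G. act' (b y * ring_inv (b (u \<otimes>\<^bsub>G\<^esub> y))) (X (act (b (u \<otimes>\<^bsub>G\<^esub> y)) v)))"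
      using sum.reindex_bij_betw[OF bij, of "\<lambda>w. act' (b y * ring_inv (b w)) (X (act (b w) v))"] by simp
    also have "\<dots> = ?A (act (b y) v)"
      unfolding avg_def by (rule sum.cong) (simp_all add: tm)
    finally show ?thesis by simp
  qed
  have sub: "E.subspace {x. \<forall>v. ?A (act x v) = act' x (?A v)}"
    unfolding E.subspace_def
    using lin_zero[OF em_lin2[OF emV E.vector_space_axioms]] lin_zero[OF em_lin2[OF emW E.vector_space_axioms]]
      lin_zero[OF Alin] lin_add[OF Alin] lin_scale[OF Alin]
    by (simp add: em_scE[OF emV] em_scE[OF emW] lin_add[OF em_lin2[OF emV E.vector_space_axioms]]
        lin_add[OF em_lin2[OF emW E.vector_space_axioms]])
  have "x \<in> E.span (b ` carrier G)" using spanb by simp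
  then have "\<forall>v. ?A (act x v) = act' x (?A v)"
    using E.span_induct[OF _ sub] base by blast
  then show ?thesis by blast
qed




lemma key_identity:
  fixes G :: "('g, 'm) monoid_scheme" and scE :: "'k::field \<Rightarrow> 'e::ring_1 \<Rightarrow> 'e"
    and scV :: "'k \<Rightarrow> 'v::ab_group_add \<Rightarrow> 'v" and scW :: "'k \<Rightarrow> 'w::ab_group_add \<Rightarrow> 'w"
  assumes emV: "E_module scE scV act" and emW: "E_module scE scW act'"
    and BV: "finite (basis_of scV) \<and> \<not> module.dependent scV (basis_of scV) \<and> module.span scV (basis_of scV) = UNIV"
    and BW: "finite (basis_of scW) \<and> \<not> module.dependent scW (basis_of scW) \<and> module.span scW (basis_of scW) = UNIV"
    and ti: "Vector_Spaces.linear scW scW ti"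
  shows "(\<Sum>w\<in>carrier G. vtrace scV (\<lambda>v. act (b w) (t v)) * vtrace scW (\<lambda>u. ti (act' (ring_inv (b w)) u)))
     = (\<Sum>i\<in>basis_of scV. \<Sum>j\<in>basis_of scW. module.representation scW (basis_of scW)
          (ti (avg G b act act' (\<lambda>v. scW (module.representation scV (basis_of scV) v i) j) (t i))) j)"
proof -
  interpret V: vector_space scV by (rule em_vs[OF emV])
  interpret W: vector_space scW by (rule em_vs[OF emW])
  define RV where "RV = V.representation (basis_of scV)"
  define RW where "RW = W.representation (basis_of scW)"
  have inW: "x \<in> W.span (basis_of scW)" for x using BW by simp
  have RWs: "RW (sum f A) = (\<lambda>j. \<Sum>a\<in>A. RW (f a) j)" for f :: "'a \<Rightarrow> 'w" and A
    unfolding RW_def by (rule W.representation_sum) (use BW in auto)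
  have RWc: "RW (scW c x) = (\<lambda>j. c * RW x j)" for c x
    unfolding RW_def by (rule W.representation_scale) (use BW in auto)
  have "(\<Sum>i\<in>basis_of scV. \<Sum>j\<in>basis_of scW. RW (ti (avg G b act act' (\<lambda>v. scW (RV v i) j) (t i))) j)
      = (\<Sum>i\<in>basis_of scV. \<Sum>j\<in>basis_of scW. \<Sum>w\<in>carrier G. RV (act (b w) (t i)) i * RW (ti (act' (ring_inv (b w)) j)) j)"
    unfolding avg_def lin_sum[OF ti] RWs lin_scale[OF em_lin[OF emW]] lin_scale[OF ti] RWc ..
  also have "\<dots> = (\<Sum>w\<in>carrier G. \<Sum>i\<in>basis_of scV. \<Sum>j\<in>basis_of scW. RV (act (b w) (t i)) i * RW (ti (act' (ring_inv (b w)) j)) j)"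
    by (simp add: sum.swap[of _ "carrier G"])
  also have "\<dots> = (\<Sum>w\<in>carrier G. vtrace scV (\<lambda>v. act (b w) (t v)) * vtrace scW (\<lambda>u. ti (act' (ring_inv (b w)) u)))"
    unfolding vtrace_eq RV_def RW_def sum_product ..
  finally show ?thesis unfolding RV_def RW_def by simp
qed


lemma iso_part:
  fixes G :: "('g, 'm) monoid_scheme" and scE :: "'k::field_char_0 \<Rightarrow> 'e::ring_1 \<Rightarrow> 'e"
    and scV :: "'k \<Rightarrow> 'v::ab_group_add \<Rightarrow> 'v"
  assumes k: "alg_closed_field TYPE('k)"
    and grp: "group G" and fin: "finite (carrier G)" and alg: "is_algebra scE"
    and sV: "simple_E_module scE scV act"
    and bm: "\<And>w y. w \<in> carrier G \<Longrightarrow> y \<in> carrier G \<Longrightarrow> \<exists>a. a \<noteq> 0 \<and> b w * b y = scE a (b (w \<otimes>\<^bsub>G\<^esub> y))"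
    and bi: "\<And>w. w \<in> carrier G \<Longrightarrow> b w * ring_inv (b w) = 1 \<and> ring_inv (b w) * b w = 1"
    and spanb: "module.span scE (b ` carrier G) = UNIV"
    and BV: "finite (basis_of scV) \<and> \<not> module.dependent scV (basis_of scV) \<and> module.span scV (basis_of scV) = UNIV"
    and t_lin: "Vector_Spaces.linear scV scV t" and t_bij: "bij t"
  shows "(1 / of_nat (card (carrier G))) *
              (\<Sum>w\<in>carrier G. vtrace scV (\<lambda>v. act (b w) (t v)) *
                               vtrace scV (\<lambda>u. inv_into UNIV t (act (ring_inv (b w)) u))) = 1"
proof -
  have emV: "E_module scE scV act" using sV by (simp add: simple_E_module_def)
  interpret V: vector_space scV by (rule em_vs[OF emV])
  define B where "B = basis_of scV"
  define RV where "RV = V.representation B"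
  define ti where "ti = inv_into UNIV t"
  have ti: "Vector_Spaces.linear scV scV ti"
  proof -
    have "module_pair scV scV" by (simp add: module_pair_def V.module_axioms)
    from module_pair.bij_module_hom_imp_inv_module_hom[OF this lin_mh[OF t_lin] t_bij]
    show ?thesis unfolding ti_def by (simp add: module_hom_iff_linear)
  qed
  have tit: "ti (t x) = x" for x unfolding ti_def using t_bij by (simp add: bij_def inv_into_f_f)
  have fB: "finite B" and iB: "V.independent B" and sB: "V.span B = UNIV" using BV by (auto simp: B_def)
  have inV: "x \<in> V.span B" for x using sB by simp
  have RVs: "RV (sum f A) = (\<lambda>j. \<Sum>a\<in>A. RV (f a) j)" for f :: "'a \<Rightarrow> 'v" and A
    unfolding RV_def by (rule V.representation_sum) (use iB inV in auto)
  have RVc: "RV (scV c x) = (\<lambda>j. c * RV x j)" for c x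
    unfolding RV_def by (rule V.representation_scale) (use iB inV in auto)
  have RVb: "i \<in> B \<Longrightarrow> RV i = (\<lambda>v. if v = i then 1 else 0)" for i
    unfolding RV_def by (rule V.representation_basis[OF iB])
  have sre: "(\<Sum>c\<in>B. scV (RV x c) c) = x" for x
    unfolding RV_def by (rule V.sum_representation_eq) (use iB inV fB in auto)
  have GE: "b w * ring_inv (b w) = 1" if "w \<in> carrier G" for w using bi[OF that] by simp
  define e where "e i j v = scV (RV v i) j" for i j v
  have elin: "Vector_Spaces.linear scV scV (e i j)" for i j
    unfolding Vector_Spaces.linear_iff e_def using V.vector_space_axioms
    by (simp add: RV_def V.representation_add[OF iB] V.representation_scale[OF iB] inV V.scale_left_distrib V.scale_scale)
  define P where "P i j = avg G b act act (e i j)" for i j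
  have Plin: "Vector_Spaces.linear scV scV (P i j)" for i j unfolding P_def by (rule avg_lin[OF emV emV elin])
  have Pcomm: "P i j (act x v) = act x (P i j v)" for i j x v
    unfolding P_def by (rule avg_comm[OF grp alg emV emV elin bm bi spanb]) auto
  define l where "l i j = (SOME l. \<forall>v. P i j v = scV l v)" for i j
  have lP: "P i j v = scV (l i j) v" for i j v
  proof -
    have ex: "\<exists>l. \<forall>v. P i j v = scV l v"
      by (rule schur_scalar[OF sV fB sB k Plin[of i j]]) (rule Pcomm)
    have "\<forall>v. P i j v = scV (l i j) v" unfolding l_def by (rule someI_ex[OF ex])
    then show ?thesis by blast
  qed
  have key: "(\<Sum>w\<in>carrier G. vtrace scV (\<lambda>v. act (b w) (t v)) * vtrace scV (\<lambda>u. ti (act (ring_inv (b w)) u)))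
     = (\<Sum>i\<in>B. \<Sum>j\<in>B. RV (ti (P i j (t i))) j)"
    unfolding B_def RV_def P_def e_def by (rule key_identity[OF emV emV BV BV ti])
  also have "\<dots> = (\<Sum>i\<in>B. \<Sum>j\<in>B. if j = i then l i j else 0)"
    by (intro sum.cong refl) (simp add: lP lin_scale[OF ti] tit RVc RVb)
  also have "\<dots> = (\<Sum>i\<in>B. l i i)" using fB by (intro sum.cong refl) (simp add: sum.delta)
  finally have K: "(\<Sum>w\<in>carrier G. vtrace scV (\<lambda>v. act (b w) (t v)) * vtrace scV (\<lambda>u. ti (act (ring_inv (b w)) u)))
     = (\<Sum>i\<in>B. l i i)" .
  have tr: "l i i * of_nat (card B) = of_nat (card (carrier G))" if i: "i \<in> B" for i
  proof -
    have "(\<Sum>c\<in>B. RV (P i i c) c) = (\<Sum>c\<in>B. l i i)"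
      by (intro sum.cong refl) (simp add: lP RVc RVb)
    also have "\<dots> = l i i * of_nat (card B)" by simp
    finally have 1: "(\<Sum>c\<in>B. RV (P i i c) c) = l i i * of_nat (card B)" .
    have "(\<Sum>c\<in>B. RV (P i i c) c) = (\<Sum>c\<in>B. \<Sum>w\<in>carrier G. RV (act (b w) c) i * RV (act (ring_inv (b w)) i) c)"
      unfolding P_def avg_def e_def RVs lin_scale[OF em_lin[OF emV]] RVc ..
    also have "\<dots> = (\<Sum>w\<in>carrier G. \<Sum>c\<in>B. RV (act (ring_inv (b w)) i) c * RV (act (b w) c) i)"
      by (simp add: sum.swap[of _ "carrier G"] mult.commute)
    also have "\<dots> = (\<Sum>w\<in>carrier G. 1)"
    proof (intro sum.cong refl)
      fix w assume w: "w \<in> carrier G"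
      let ?x = "act (ring_inv (b w)) i"
      have "(\<Sum>c\<in>B. RV ?x c * RV (act (b w) c) i) = RV (act (b w) (\<Sum>c\<in>B. scV (RV ?x c) c)) i"
        unfolding lin_sum[OF em_lin[OF emV]] lin_scale[OF em_lin[OF emV]] RVs RVc ..
      also have "\<dots> = RV i i" unfolding sre em_mult[OF emV, symmetric] GE[OF w] em_one[OF emV] ..
      also have "\<dots> = 1" using RVb[OF i] by simp
      finally show "(\<Sum>c\<in>B. RV ?x c * RV (act (b w) c) i) = 1" .
    qed
    also have "\<dots> = of_nat (card (carrier G))" by simp
    finally show ?thesis using 1 by simp
  qed
  have B0: "B \<noteq> {}"
  proof
    assume "B = {}"
    then have "V.span B = {0}" by simp
    then show False using sB simple_nonzero[OF sV] by auto
  qed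
  have cB: "(of_nat (card B) :: 'k) \<noteq> 0" using B0 fB by simp
  have "(\<Sum>i\<in>B. l i i) = (\<Sum>i\<in>B. of_nat (card (carrier G)) / of_nat (card B))"
    by (intro sum.cong refl) (metis tr cB nonzero_eq_divide_eq)
  also have "\<dots> = of_nat (card (carrier G))" using cB by simp
  finally have "(\<Sum>i\<in>B. l i i) = of_nat (card (carrier G))" .
  moreover have "card (carrier G) \<noteq> 0"
    using fin grp by (metis card_0_eq empty_iff group.is_monoid monoid.one_closed)
  ultimately show ?thesis using K unfolding ti_def by simp
qed


theorem mainTheorem13:
  fixes G :: "('g, 'm) monoid_scheme"
    and scE :: "'k::field_char_0 \<Rightarrow> 'e::ring_1 \<Rightarrow> 'e"
    and Ecomp :: "'g \<Rightarrow> 'e set"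
    and b :: "'g \<Rightarrow> 'e"
    and scV :: "'k \<Rightarrow> 'v::ab_group_add \<Rightarrow> 'v" and act :: "'e \<Rightarrow> 'v \<Rightarrow> 'v" and t :: "'v \<Rightarrow> 'v"
    and scW :: "'k \<Rightarrow> 'w::ab_group_add \<Rightarrow> 'w" and act' :: "'e \<Rightarrow> 'w \<Rightarrow> 'w" and t' :: "'w \<Rightarrow> 'w"
  assumes k_closed: "alg_closed_field TYPE('k)"
    and grp: "group G" and fin: "finite (carrier G)"
    and alg: "is_algebra scE"
    and dsum: "internal_direct_sum scE (carrier G) Ecomp"
    and dim1: "\<And>w. w \<in> carrier G \<Longrightarrow> vector_space.dim scE (Ecomp w) = 1"
    and mult: "\<And>w y. w \<in> carrier G \<Longrightarrow> y \<in> carrier G \<Longrightarrow>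
                 subspace_prod scE (Ecomp w) (Ecomp y) = Ecomp (monoid.mult G w y)"
    and b_in: "\<And>w. w \<in> carrier G \<Longrightarrow> b w \<in> Ecomp w"
    and b_nz: "\<And>w. w \<in> carrier G \<Longrightarrow> b w \<noteq> 0"
    and V_simple: "simple_E_module scE scV act"
    and W_simple: "simple_E_module scE scW act'"
    and t_lin: "Vector_Spaces.linear scV scV t" and t_bij: "bij t"
    and t'_lin: "Vector_Spaces.linear scW scW t'" and t'_bij: "bij t'"
  shows "(\<not> E_module_iso scV act scW act' \<longrightarrow>
            (1 / of_nat (card (carrier G))) *
              (\<Sum>w\<in>carrier G. vtrace scV (\<lambda>v. act (b w) (t v)) *
                               vtrace scW (\<lambda>u. inv_into UNIV t' (act' (ring_inv (b w)) u))) = 0)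
       \<and> (1 / of_nat (card (carrier G))) *
              (\<Sum>w\<in>carrier G. vtrace scV (\<lambda>v. act (b w) (t v)) *
                               vtrace scV (\<lambda>u. inv_into UNIV t (act (ring_inv (b w)) u))) = 1"
proof -
  have bm: "\<And>w y. w \<in> carrier G \<Longrightarrow> y \<in> carrier G \<Longrightarrow> \<exists>a. a \<noteq> 0 \<and> b w * b y = scE a (b (w \<otimes>\<^bsub>G\<^esub> y))"
    by (rule b_mult[OF grp alg dsum dim1 mult b_in b_nz])
  have bi: "\<And>w. w \<in> carrier G \<Longrightarrow> b w * ring_inv (b w) = 1 \<and> ring_inv (b w) * b w = 1"
    by (rule b_inv[OF grp alg dsum dim1 mult b_in b_nz])
  have spanb: "module.span scE (b ` carrier G) = UNIV"
    by (rule span_b[OF grp alg dsum dim1 mult b_in b_nz])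
  have vsE: "vector_space scE" using alg by (simp add: is_algebra_def)
  have emV: "E_module scE scV act" using V_simple by (simp add: simple_E_module_def)
  have emW: "E_module scE scW act'" using W_simple by (simp add: simple_E_module_def)
  interpret V: vector_space scV by (rule em_vs[OF emV])
  interpret W: vector_space scW by (rule em_vs[OF emW])
  have fb: "finite (b ` carrier G)" using fin by simp
  obtain FV where FV: "finite FV" "V.span FV = UNIV" using simple_fin[OF V_simple vsE fb spanb] by blast
  obtain FW where FW: "finite FW" "W.span FW = UNIV" using simple_fin[OF W_simple vsE fb spanb] by blast
  have BV: "finite (basis_of scV) \<and> \<not> V.dependent (basis_of scV) \<and> V.span (basis_of scV) = UNIV"
    by (rule basis_of[OF em_vs[OF emV] FV])
  have BW: "finite (basis_of scW) \<and> \<not> W.dependent (basis_of scW) \<and> W.span (basis_of scW) = UNIV"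
    by (rule basis_of[OF em_vs[OF emW] FW])
  have part1: "(1 / of_nat (card (carrier G))) *
              (\<Sum>w\<in>carrier G. vtrace scV (\<lambda>v. act (b w) (t v)) *
                               vtrace scW (\<lambda>u. inv_into UNIV t' (act' (ring_inv (b w)) u))) = 0"
    if niso: "\<not> E_module_iso scV act scW act'"
  proof -
    define ti where "ti = inv_into UNIV t'"
    have ti: "Vector_Spaces.linear scW scW ti"
    proof -
      have "module_pair scW scW" by (simp add: module_pair_def W.module_axioms)
      from module_pair.bij_module_hom_imp_inv_module_hom[OF this lin_mh[OF t'_lin] t'_bij]
      show ?thesis unfolding ti_def by (simp add: module_hom_iff_linear)
    qed
    define RV where "RV = V.representation (basis_of scV)"
    define RW where "RW = W.representation (basis_of scW)"
    have iB: "V.independent (basis_of scV)" using BV by simp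
    have inV: "x \<in> V.span (basis_of scV)" for x using BV by simp
    define e where "e i j v = scW (RV v i) j" for i j v
    have elin: "Vector_Spaces.linear scV scW (e i j)" for i j
      unfolding Vector_Spaces.linear_iff e_def using V.vector_space_axioms W.vector_space_axioms
      by (simp add: RV_def V.representation_add[OF iB] V.representation_scale[OF iB] inV W.scale_left_distrib W.scale_scale)
    define P where "P i j = avg G b act act' (e i j)" for i j
    have Plin: "Vector_Spaces.linear scV scW (P i j)" for i j unfolding P_def by (rule avg_lin[OF emV emW elin])
    have Pcomm: "P i j (act x v) = act' x (P i j v)" for i j x v
      unfolding P_def by (rule avg_comm[OF grp alg emV emW elin bm bi spanb]) auto
    have P0: "P i j v = 0" for i j v
      by (rule schur_zero[OF V_simple W_simple Plin[of i j] _ niso]) (rule Pcomm)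
    have "(\<Sum>w\<in>carrier G. vtrace scV (\<lambda>v. act (b w) (t v)) * vtrace scW (\<lambda>u. ti (act' (ring_inv (b w)) u)))
       = (\<Sum>i\<in>basis_of scV. \<Sum>j\<in>basis_of scW. RW (ti (P i j (t i))) j)"
      unfolding RV_def RW_def P_def e_def by (rule key_identity[OF emV emW BV BW ti])
    also have "\<dots> = 0" by (simp add: P0 lin_zero[OF ti] RW_def W.representation_zero)
    finally show ?thesis unfolding ti_def by simp
  qed
  have part2: "(1 / of_nat (card (carrier G))) *
              (\<Sum>w\<in>carrier G. vtrace scV (\<lambda>v. act (b w) (t v)) *
                               vtrace scV (\<lambda>u. inv_into UNIV t (act (ring_inv (b w)) u))) = 1"
    by (rule iso_part[OF k_closed grp fin alg V_simple bm bi spanb BV t_lin t_bij])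
  show ?thesis using part1 part2 by blast
qed

end
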